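(* Let $B_w$ be the weighted backward shift on $\ell^2$ with weights $w_n=\sqrt{(n+1)/n}$, $n\ge1$. Then $B_w$ is $2$-frequently hypercyclic on $\ell^2$ and is not frequently hypercyclic; consequently $B_w$ is $q$-frequently hypercyclic for every $q\ge2$.
   Context: The weighted backward shift is $B_w(e_n)=w_ne_{n-1}$ for $n\ge1$, $e_0=0$. An operator $T$ on a separable topological vector space $X$ is $q$-frequently hypercyclic ($q\in\mathbb{N}$) if there is $x\in X$ such that for every nonempty open $U$ the set $\{n\in\mathbb{N}:T^nx\in U\}$ has positive $q$-lower density, where $q\text{-}\underline{\mathrm{dens}}(A)=\liminf_{N\to\infty}\frac{\mathrm{card}\{n\in A:n\le N^q\}}{N}$. Frequently hypercyclic means $1$-frequently hypercyclic (i.e. positive lower density $\liminf_N \mathrm{card}\{n\in A:n\le N\}/N>0$). *)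

theory Defs
  imports "HOL-Analysis.Analysis"
begin

text \<open>The sequence space l2 (real scalars), realised concretely as square-summable
  sequences indexed by nat (index 0 corresponds to e_0).\<close>
definition l2 :: "(nat \<Rightarrow> real) set" where
  "l2 = {x. summable (\<lambda>n. (x n)\<^sup>2)}"

definition l2_norm :: "(nat \<Rightarrow> real) \<Rightarrow> real" where
  "l2_norm x = sqrt (\<Sum>n. (x n)\<^sup>2)"

definition l2_open :: "(nat \<Rightarrow> real) set \<Rightarrow> bool" where
  "l2_open U \<longleftrightarrow> U \<subseteq> l2 \<and>
     (\<forall>y\<in>U. \<exists>e>0. \<forall>z\<in>l2. l2_norm (z - y) < e \<longrightarrow> z \<in> U)"

text \<open>Weighted backward shift: B_w(e_n) = w_n e_(n-1) for n \<ge> 1, B_w(e_0) = 0,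
  i.e. (B_w x)_k = w_(k+1) x_(k+1).\<close>
definition bwshift :: "(nat \<Rightarrow> real) \<Rightarrow> (nat \<Rightarrow> real) \<Rightarrow> (nat \<Rightarrow> real)" where
  "bwshift w x = (\<lambda>k. w (Suc k) * x (Suc k))"

definition q_lower_dens :: "nat \<Rightarrow> nat set \<Rightarrow> ereal" where
  "q_lower_dens q A =
     liminf (\<lambda>N::nat. ereal (real (card {n\<in>A. n \<le> N ^ q}) / real N))"

definition l2_q_freq_hypercyclic :: "nat \<Rightarrow> ((nat \<Rightarrow> real) \<Rightarrow> (nat \<Rightarrow> real)) \<Rightarrow> bool" where
  "l2_q_freq_hypercyclic q T \<longleftrightarrow>
     (\<exists>x\<in>l2. \<forall>U. l2_open U \<and> U \<noteq> {} \<longrightarrow> q_lower_dens q {n. (T ^^ n) x \<in> U} > 0)"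

definition l2_freq_hypercyclic :: "((nat \<Rightarrow> real) \<Rightarrow> (nat \<Rightarrow> real)) \<Rightarrow> bool" where
  "l2_freq_hypercyclic T \<longleftrightarrow> l2_q_freq_hypercyclic 1 T"

end

theory Submission
  imports Defs "HOL-Library.Discrete_Functions" "HOL-Library.Countable"
begin



definition pp :: "nat \<Rightarrow> nat \<Rightarrow> real" where
  "pp i n = sqrt (real (i+n+1) / real (i+1))"

lemma pp_pos: "pp i n > 0" by (simp add: pp_def)

lemma pp_sq: "(pp i n)^2 = real (i+n+1) / real (i+1)"
  by (simp add: pp_def)

lemma Tn:
  assumes w: "\<And>n. n \<ge> 1 \<Longrightarrow> w n = sqrt (real (n + 1) / real n)"
  shows "(bwshift w ^^ n) x = (\<lambda>i. pp i n * x (i+n))"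
proof (induction n)
  case 0
  then show ?case by (simp add: pp_def)
next
  case (Suc n)
  have "w (Suc k) * pp (Suc k) n = pp k (Suc n)" for k
  proof -
    have e: "real (k+2) / real (k+1) * (real (k+n+2) / real (k+2)) = real (k+n+2) / real (k+1)"
    proof -
      have "\<And>a b c::real. a \<noteq> 0 \<Longrightarrow> a / b * (c / a) = c / b" by simp
      then show ?thesis by (metis of_nat_0_eq_iff add_eq_0_iff_both_eq_0 zero_neq_numeral)
    qed
    have "w (Suc k) * pp (Suc k) n = sqrt (real (k+2) / real (k+1)) * sqrt (real (k+n+2) / real (k+2))"
      using w[of "Suc k"] by (simp add: pp_def add.commute add.left_commute)
    also have "\<dots> = sqrt (real (k+2) / real (k+1) * (real (k+n+2) / real (k+2)))"
      by (simp only: real_sqrt_mult)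
    also have "\<dots> = pp k (Suc n)" unfolding e by (simp add: pp_def add.commute add.left_commute)
    finally show ?thesis .
  qed
  then show ?case using Suc by (simp add: bwshift_def fun_eq_iff mult.assoc)
qed




lemma sum_add_split: "(\<Sum>m<(a::nat)+k. f m) = (\<Sum>m<a. f m) + (\<Sum>i<k. f (a+i))"
  by (induction k) (auto simp: add.assoc)

lemma sq_blocks: "(\<Sum>m<(b::nat)^2. f m) = (\<Sum>J<b. \<Sum>i<2*J+1. f (J^2+i))"
proof (induction b)
  case 0 then show ?case by simp
next
  case (Suc b)
  have e: "(Suc b)^2 = b^2 + (2*b+1)" by (simp add: power2_eq_square)
  have "(\<Sum>m<(Suc b)^2. f m) = (\<Sum>m<b^2. f m) + (\<Sum>i<2*b+1. f (b^2+i))"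
    unfolding e by (rule sum_add_split)
  then show ?case by (simp only: sum.lessThan_Suc Suc.IH)
qed

lemma fsqrt_block: "i \<le> 2*J \<Longrightarrow> floor_sqrt (J^2+i) = J"
  by (rule floor_sqrt_unique) (auto simp: power2_eq_square)

definition ql :: "nat \<Rightarrow> rat list" where "ql k = from_nat k"
definition tvec :: "nat \<Rightarrow> nat \<Rightarrow> real" where
  "tvec k i = (if i < length (ql k) then real_of_rat (ql k ! i) else 0)"
definition Ssz :: "nat \<Rightarrow> real" where
  "Ssz k = (\<Sum>i<length (ql k). (tvec k i)^2 * real (i+1))"
definition Hsz :: "nat \<Rightarrow> real" where "Hsz k = real (length (ql k)) + Ssz k"

function nu :: "nat \<Rightarrow> nat" where
  "nu j = (if j = 0 \<or> odd j then 0 else Suc (nu (j div 2)))"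
  by auto
termination by (relation "Wellfounded.measure id") auto
declare nu.simps[simp del]

definition gg :: "nat \<Rightarrow> real" where "gg j = sqrt (sqrt (real j))"
definition tg :: "nat \<Rightarrow> nat \<Rightarrow> real" where
  "tg j = (if j \<ge> 1 \<and> Hsz (nu j) \<le> gg j then tvec (nu j) else (\<lambda>_. 0))"
definition xx :: "nat \<Rightarrow> real" where
  "xx m = tg (floor_sqrt m) (m - (floor_sqrt m)^2) / pp (m - (floor_sqrt m)^2) ((floor_sqrt m)^2)"

definition phi :: "nat \<Rightarrow> real" where "phi d = 1 / (real (d+1) * sqrt (real (d+1)))"
definition Z :: real where "Z = suminf phi"

lemma phi_nonneg: "phi d \<ge> 0" by (simp add: phi_def)

lemma summable_phi: "summable phi"
proof -
  have s1: "summable (\<lambda>n. real n powr (-(3/2)))" by (subst summable_real_powr_iff) simp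
  have s2: "summable (\<lambda>n. real (Suc n) powr (-(3/2)))"
    using s1 by (rule summable_Suc_iff[THEN iffD2])
  have s3: "phi n = real (Suc n) powr (-(3/2))" for n
  proof -
    have a: "real (Suc n) powr (-(3/2)) = inverse (real (Suc n) powr (3/2))"
      by (rule powr_minus)
    have b: "real (Suc n) powr (3/2) = real (Suc n) powr (1 + 1/2)" by simp
    have c: "real (Suc n) powr (1 + 1/2) = real (Suc n) powr 1 * real (Suc n) powr (1/2)"
      by (rule powr_add)
    have d: "real (Suc n) powr 1 * real (Suc n) powr (1/2) = real (Suc n) * sqrt (real (Suc n))"
      by (simp add: powr_half_sqrt)
    show ?thesis unfolding a b c d phi_def by (simp add: divide_inverse)
  qed
  show ?thesis unfolding s3 using s2 .
qed

lemma sum_phi_le: "(\<Sum>J<M. if j < J then phi (J - j - 1) else 0) \<le> Z"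
proof -
  have "(\<Sum>J<M. if j < J then phi (J - j - 1) else 0) = (\<Sum>d<M - j - 1. phi d)"
  proof (induction M)
    case 0 then show ?case by simp
  next
    case (Suc M)
    show ?case
    proof (cases "j < M")
      case True
      then have "Suc M - j - 1 = Suc (M - j - 1)" by simp
      then show ?thesis using Suc True by simp
    next
      case False
      then have "Suc M - j - 1 = M - j - 1" by simp
      then show ?thesis using Suc False by simp
    qed
  qed
  also have "\<dots> \<le> Z" unfolding Z_def
    by (rule sum_le_suminf[OF summable_phi]) (auto simp: phi_nonneg)
  finally show ?thesis .
qed

lemma Z_nonneg: "Z \<ge> 0"
  unfolding Z_def by (rule suminf_nonneg[OF summable_phi phi_nonneg])

lemma Ssz_nonneg: "Ssz k \<ge> 0" unfolding Ssz_def by (auto intro: sum_nonneg)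

lemma vec_sum_le: "(\<Sum>i<N. (tvec k i)^2 * real (i+1)) \<le> Ssz k"
proof -
  have "(\<Sum>i<N. (tvec k i)^2 * real (i+1)) \<le> (\<Sum>i<N + length (ql k). (tvec k i)^2 * real (i+1))"
    by (rule sum_mono2) auto
  also have "\<dots> = Ssz k" unfolding Ssz_def
    by (rule sum.mono_neutral_right) (auto simp: tvec_def)
  finally show ?thesis .
qed

lemma gg_nonneg: "gg j \<ge> 0" by (simp add: gg_def)

lemma tg_sum_le: "(\<Sum>i<N. (tg j i)^2 * real (i+1)) \<le> gg j"
proof (cases "j \<ge> 1 \<and> Hsz (nu j) \<le> gg j")
  case True
  then have "tg j = tvec (nu j)" by (simp add: tg_def)
  moreover have "Ssz (nu j) \<le> gg j" using True by (simp add: Hsz_def)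
  ultimately show ?thesis using vec_sum_le[where N=N and k="nu j"] by simp
next
  case False
  then have "tg j = (\<lambda>_. 0)" unfolding tg_def by (simp only: if_False)
  then show ?thesis by (simp add: gg_nonneg)
qed

lemma gg_le: "gg j \<le> real j"
proof (cases "j = 0")
  case False
  have l: "sqrt x \<le> x" if "x \<ge> 1" for x :: real
  proof -
    have "x \<le> x^2" using that by (simp add: power2_eq_square)
    then have "sqrt x \<le> sqrt (x^2)" by (rule real_sqrt_le_mono)
    then show ?thesis using that by simp
  qed
  have "sqrt (real j) \<le> real j" using False l by simp
  moreover have "sqrt (sqrt (real j)) \<le> sqrt (real j)"
    using False l by simp
  ultimately show ?thesis unfolding gg_def by linarith
qed (simp add: gg_def)

lemma tg_zero: "i \<ge> 2*j+1 \<Longrightarrow> tg j i = 0"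
proof -
  assume i: "i \<ge> 2*j+1"
  show "tg j i = 0"
  proof (cases "j \<ge> 1 \<and> Hsz (nu j) \<le> gg j")
    case True
    then have "real (length (ql (nu j))) \<le> real j"
      using gg_le[of j] Ssz_nonneg[of "nu j"] by (simp add: Hsz_def)
    then have "length (ql (nu j)) \<le> i" using i by simp
    moreover have "tg j = tvec (nu j)" using True by (simp add: tg_def)
    ultimately show ?thesis by (simp add: tvec_def)
  next
    case False
    then have "tg j = (\<lambda>_. 0)" unfolding tg_def by (simp only: if_False)
    then show ?thesis by simp
  qed
qed

lemma tg0: "tg 0 i = 0" by (simp add: tg_def)

lemma xx_block: "i \<le> 2*J \<Longrightarrow> xx (J^2+i) = tg J i / pp i (J^2)"
proof -
  assume "i \<le> 2*J"
  then have fs: "floor_sqrt (J^2+i) = J" by (rule fsqrt_block)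
  show ?thesis unfolding xx_def fs by (simp only: diff_add_inverse)
qed




lemma ineq_e_real:
  fixes a b :: real
  assumes "0 < a" "a < b"
  shows "sqrt (sqrt b) / (b^2 - a^2) \<le> (1 / ((b-a) * sqrt (b-a))) / sqrt (sqrt a)"
proof -
  define t where "t = sqrt (sqrt (a+b))"
  have ab: "0 \<le> a + b" using assms by linarith
  have t0: "t \<ge> 0" using ab by (simp add: t_def)
  have t2: "t^2 = sqrt (a+b)" using ab by (simp add: t_def)
  have t4: "t^4 = a + b"
  proof -
    have "t^4 = (t^2)^2" by (simp add: power4_eq_xxxx power2_eq_square)
    then show ?thesis using assms t2 by simp
  qed
  have h1: "sqrt (sqrt b) \<le> t" using assms by (simp add: t_def)
  have h2: "sqrt (sqrt a) \<le> t" using assms by (simp add: t_def)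
  have h3: "sqrt (b-a) \<le> t^2" using assms by (simp add: t2)
  have p: "sqrt (sqrt b) * sqrt (sqrt a) * sqrt (b-a) \<le> t * t * t^2"
    using h1 h2 h3 t0 assms by (intro mult_mono) auto
  also have "\<dots> = a + b" using t4 by (simp add: power4_eq_xxxx power2_eq_square)
  finally have p: "sqrt (sqrt b) * sqrt (sqrt a) * sqrt (b-a) \<le> a + b" .
  have pos: "0 < b - a" "0 < sqrt (b-a)" "0 < sqrt (sqrt a)" "0 < b^2 - a^2"
    using assms by (auto simp: power2_eq_square intro: mult_strict_mono)
  have e: "b^2 - a^2 = (a+b) * (b-a)" by (simp add: power2_eq_square algebra_simps)
  have "sqrt (sqrt b) * (sqrt (sqrt a) * ((b-a) * sqrt (b-a))) \<le> (a+b)*(b-a)"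
    using mult_right_mono[OF p, of "b-a"] pos by (simp add: ac_simps)
  then show ?thesis using pos unfolding e
    by (simp add: divide_simps ac_simps)
qed

lemma ineq_x_real:
  fixes b :: real
  assumes "1 \<le> b"
  shows "sqrt (sqrt b) / (b^2 + 1) \<le> 1 / (b * sqrt b)"
proof -
  define s where "s = sqrt (sqrt b)"
  have s1: "1 \<le> s" using assms by (simp add: s_def)
  have sq: "sqrt b = s^2" using assms by (simp add: s_def)
  have sb: "b = s^4"
  proof -
    have "s^4 = (s^2)^2" by (simp add: power4_eq_xxxx power2_eq_square)
    then show ?thesis using assms sq[symmetric] by simp
  qed
  have "s^7 \<le> s^8" using s1 by (intro power_increasing) auto
  moreover have "s * (s^4 * s^2) = s^7" "(s^4)^2 = s^8" by algebra+
  ultimately have "s * (s^4 * s^2) \<le> (s^4)^2 + 1" by simp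
  then have "s * (b * sqrt b) \<le> b^2 + 1" unfolding sq by (simp only: sb[symmetric])
  moreover have "0 < b * sqrt b" using assms by simp
  moreover have "0 < b^2 + 1" by (smt (verit) zero_le_power2)
  ultimately show ?thesis unfolding s_def[symmetric] using assms
    by (simp add: divide_simps ac_simps)
qed

lemma xx_sq_block: "i \<le> 2*J \<Longrightarrow> (xx (J^2+i))^2 = (tg J i)^2 * real (i+1) / real (J^2+i+1)"
proof -
  assume "i \<le> 2*J"
  then have "xx (J^2+i) = tg J i / pp i (J^2)" by (rule xx_block)
  then have "(xx (J^2+i))^2 = (tg J i)^2 / (pp i (J^2))^2" by (simp add: power_divide)
  also have "\<dots> = (tg J i)^2 * real (i+1) / real (J^2+i+1)"
    unfolding pp_sq by (simp add: add.commute add.left_commute)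
  finally show ?thesis .
qed

lemma ineq_x: "1 \<le> J \<Longrightarrow> gg J / real (J^2+1) \<le> phi (J - 0 - 1)"
proof -
  assume J: "1 \<le> J"
  have "phi (J - 0 - 1) = 1 / (real J * sqrt (real J))" using J by (simp add: phi_def)
  moreover have "gg J / real (J^2+1) = sqrt (sqrt (real J)) / ((real J)^2 + 1)"
    by (simp add: gg_def)
  ultimately show ?thesis using ineq_x_real[of "real J"] J by simp
qed

lemma block_x: "(\<Sum>i<2*J+1. (xx (J^2+i))^2) \<le> (if 0 < J then phi (J - 0 - 1) else 0)"
proof (cases "J = 0")
  case True
  then show ?thesis using xx_sq_block[of 0 0] by (simp add: tg0)
next
  case False
  have "(\<Sum>i<2*J+1. (xx (J^2+i))^2) \<le> (\<Sum>i<2*J+1. (tg J i)^2 * real (i+1) / real (J^2+1))"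
  proof (rule sum_mono)
    fix i assume "i \<in> {..<2*J+1}"
    then have "i \<le> 2*J" by simp
    then have "(xx (J^2+i))^2 = (tg J i)^2 * real (i+1) / real (J^2+i+1)" by (rule xx_sq_block)
    also have "\<dots> \<le> (tg J i)^2 * real (i+1) / real (J^2+1)"
      by (rule divide_left_mono) (auto intro!: mult_pos_pos add_pos_nonneg)
    finally show "(xx (J^2+i))^2 \<le> (tg J i)^2 * real (i+1) / real (J^2+1)" .
  qed
  also have "\<dots> = (\<Sum>i<2*J+1. (tg J i)^2 * real (i+1)) / real (J^2+1)"
    by (rule sum_divide_distrib[symmetric])
  also have "\<dots> \<le> gg J / real (J^2+1)"
    by (rule divide_right_mono[OF tg_sum_le]) simp
  also have "\<dots> \<le> phi (J - 0 - 1)" using False by (intro ineq_x) simp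
  finally show ?thesis using False by simp
qed

lemma summable_xx: "summable (\<lambda>m. (xx m)^2)"
proof (rule bounded_imp_summable)
  fix n
  have "(\<Sum>m\<le>n. (xx m)^2) \<le> (\<Sum>m<(n+1)^2. (xx m)^2)"
    by (rule sum_mono2) (auto simp: power2_eq_square)
  also have "\<dots> = (\<Sum>J<n+1. \<Sum>i<2*J+1. (xx (J^2+i))^2)" by (rule sq_blocks)
  also have "\<dots> \<le> (\<Sum>J<n+1. if 0 < J then phi (J - 0 - 1) else 0)"
    by (rule sum_mono) (rule block_x)
  also have "\<dots> \<le> Z" by (rule sum_phi_le)
  finally show "(\<Sum>m\<le>n. (xx m)^2) \<le> Z" .
qed simp

lemma xx_l2: "xx \<in> l2" using summable_xx by (simp add: l2_def)

lemma pp_sq_le: "(pp i n)^2 \<le> real (n+1)"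
proof -
  have "real (i+n+1) \<le> real (n+1) * real (i+1)" by (simp add: algebra_simps)
  then show ?thesis unfolding pp_sq by (simp add: divide_simps)
qed

lemma shift_l2:
  assumes "x \<in> l2"
  shows "summable (\<lambda>i. (pp i n * x (i+n))^2)"
proof (rule summable_comparison_test)
  have "summable (\<lambda>i. (x i)^2)" using assms by (simp add: l2_def)
  then have "summable (\<lambda>i. (x (i+n))^2)" by (subst summable_iff_shift)
  then show "summable (\<lambda>i. real (n+1) * (x (i+n))^2)" by (rule summable_mult)
  show "\<exists>N. \<forall>i\<ge>N. norm ((pp i n * x (i+n))^2) \<le> real (n+1) * (x (i+n))^2"
  proof (intro exI[of _ 0] allI impI)
    fix i :: nat
    have "(pp i n)^2 * (x (i+n))^2 \<le> real (n+1) * (x (i+n))^2"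
      by (rule mult_right_mono[OF pp_sq_le]) simp
    then show "norm ((pp i n * x (i+n))^2) \<le> real (n+1) * (x (i+n))^2"
      by (simp add: power_mult_distrib)
  qed
qed




lemma ineq_e: "1 \<le> j \<Longrightarrow> j < J \<Longrightarrow> gg J / real (J^2 - j^2) \<le> phi (J - j - 1) / gg j"
proof -
  assume j: "1 \<le> j" "j < J"
  have le: "j^2 \<le> J^2" using j by (simp add: power_mono)
  have a: "real (J^2 - j^2) = (real J)^2 - (real j)^2" using le by (simp add: of_nat_diff)
  have b: "real (J - j - 1 + 1) = real J - real j" using j by (simp add: of_nat_diff)
  have c: "phi (J - j - 1) = 1 / ((real J - real j) * sqrt (real J - real j))"
    unfolding phi_def b ..
  show ?thesis unfolding a c gg_def
    using ineq_e_real[of "real j" "real J"] j by simp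
qed

definition ee :: "nat \<Rightarrow> nat \<Rightarrow> real" where "ee j i = pp i (j^2) * xx (i + j^2) - tg j i"

lemma err_bound:
  assumes j: "1 \<le> j"
  shows "summable (\<lambda>i. (ee j i)^2)" "suminf (\<lambda>i. (ee j i)^2) \<le> Z / gg j"
proof -
  define F where "F m = (if m < (j+1)^2 then 0 else (pp (m - j^2) (j^2) * xx m)^2)" for m
  have F0: "F m \<ge> 0" for m by (simp add: F_def)
  have eF: "(ee j i)^2 = F (j^2+i)" for i
  proof (cases "i \<le> 2*j")
    case True
    then have "xx (i + j^2) = tg j i / pp i (j^2)" using xx_block by (simp add: add.commute)
    then have "ee j i = 0" using pp_pos[of i "j^2"] by (simp add: ee_def)
    moreover have "j^2 + i < (j+1)^2" using True by (simp add: power2_eq_square)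
    ultimately show ?thesis by (simp add: F_def)
  next
    case False
    then have "tg j i = 0" by (intro tg_zero) simp
    moreover have "\<not> (j^2 + i < (j+1)^2)" using False by (simp add: power2_eq_square)
    ultimately show ?thesis by (simp add: F_def ee_def add.commute)
  qed
  have blk: "(\<Sum>i<2*J+1. F (J^2+i)) \<le> (if j < J then phi (J - j - 1) else 0) / gg j" for J
  proof (cases "j < J")
    case False
    have "F (J^2+i) = 0" if "i < 2*J+1" for i
    proof -
      have "J^2 + i < (J+1)^2" using that by (simp add: power2_eq_square)
      also have "(J+1)^2 \<le> (j+1)^2" using False by (simp add: power_mono)
      finally show ?thesis by (simp add: F_def)
    qed
    then show ?thesis using False by simp
  next
    case True
    define D where "D = real (J^2 - j^2)"
    have jJ: "j^2 < J^2" using True by (simp add: power_strict_mono)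
    have Dpos: "D > 0" using jJ by (simp add: D_def)
    have "F (J^2+i) \<le> (tg J i)^2 * real (i+1) / D" if "i < 2*J+1" for i
    proof -
      have i: "i \<le> 2*J" using that by simp
      have "j+1 \<le> J" using True by simp
      then have "(j+1)^2 \<le> J^2" by (rule power_mono) simp
      then have ge: "\<not> (J^2 + i < (j+1)^2)" by linarith
      have F: "F (J^2+i) = (pp (J^2+i-j^2) (j^2))^2 * (xx (J^2+i))^2"
        using ge by (simp add: F_def power_mult_distrib)
      have p: "(pp (J^2+i-j^2) (j^2))^2 = real (J^2+i+1) / real (J^2+i-j^2+1)"
        unfolding pp_sq using jJ by simp
      have nz: "real (J^2+i+1) \<noteq> 0" using of_nat_neq_0[of "J^2+i"] by (simp only: Suc_eq_plus1)
      have "F (J^2+i) = real (J^2+i+1) / real (J^2+i-j^2+1) * ((tg J i)^2 * real (i+1) / real (J^2+i+1))"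
        using F p xx_sq_block[OF i] by simp
      also have "\<dots> = (tg J i)^2 * real (i+1) / real (J^2+i-j^2+1)"
      proof -
        have gen: "\<And>A B C::real. A \<noteq> 0 \<Longrightarrow> A / B * (C / A) = C / B" by simp
        show ?thesis by (rule gen[OF nz])
      qed
      also have "\<dots> \<le> (tg J i)^2 * real (i+1) / D"
      proof -
        have m1: "J^2 - j^2 \<le> J^2+i-j^2+1" using jJ by arith
        have m2: "0 < J^2 - j^2" using jJ by simp
        have r1: "real (J^2-j^2) \<le> real (J^2+i-j^2+1)" using m1 by (rule of_nat_mono)
        have p1: "0 < real (J^2+i-j^2+1)" by (simp only: of_nat_0_less_iff)
        have p2: "0 < real (J^2-j^2)" using m2 by (simp only: of_nat_0_less_iff)
        have r2: "0 < real (J^2+i-j^2+1) * real (J^2-j^2)" using p1 p2 by (rule mult_pos_pos)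
        show ?thesis unfolding D_def by (rule divide_left_mono[OF r1 _ r2]) simp
      qed
      finally show ?thesis .
    qed
    then have "(\<Sum>i<2*J+1. F (J^2+i)) \<le> (\<Sum>i<2*J+1. (tg J i)^2 * real (i+1) / D)"
      by (intro sum_mono) simp
    also have "\<dots> = (\<Sum>i<2*J+1. (tg J i)^2 * real (i+1)) / D"
      by (rule sum_divide_distrib[symmetric])
    also have "\<dots> \<le> gg J / D" by (rule divide_right_mono[OF tg_sum_le]) (use Dpos in simp)
    also have "\<dots> \<le> phi (J - j - 1) / gg j" unfolding D_def using j True by (rule ineq_e)
    finally show ?thesis using True by simp
  qed
  have part: "(\<Sum>i<n. (ee j i)^2) \<le> Z / gg j" for n
  proof -
    have "(\<Sum>i<n. (ee j i)^2) = (\<Sum>i<n. F (j^2+i))" by (simp add: eF)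
    also have "\<dots> \<le> (\<Sum>m<j^2. F m) + (\<Sum>i<n. F (j^2+i))" using F0 by (simp add: sum_nonneg)
    also have "\<dots> = (\<Sum>m<j^2+n. F m)" by (rule sum_add_split[symmetric])
    also have "\<dots> \<le> (\<Sum>m<(j+n+1)^2. F m)"
    proof (rule sum_mono2)
      have "j^2 + n \<le> (j+n+1)^2" by (simp add: power2_eq_square algebra_simps)
      then show "{..<j^2+n} \<subseteq> {..<(j+n+1)^2}" by auto
    qed (auto simp: F0)
    also have "\<dots> = (\<Sum>J<j+n+1. \<Sum>i<2*J+1. F (J^2+i))" by (rule sq_blocks)
    also have "\<dots> \<le> (\<Sum>J<j+n+1. (if j < J then phi (J - j - 1) else 0) / gg j)"
      by (rule sum_mono) (rule blk)
    also have "\<dots> = (\<Sum>J<j+n+1. (if j < J then phi (J - j - 1) else 0)) / gg j"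
      by (rule sum_divide_distrib[symmetric])
    also have "\<dots> \<le> Z / gg j" by (rule divide_right_mono[OF sum_phi_le gg_nonneg])
    finally show ?thesis .
  qed
  show s: "summable (\<lambda>i. (ee j i)^2)"
  proof (rule bounded_imp_summable[where B="Z / gg j"])
    fix n show "(\<Sum>k\<le>n. (ee j k)^2) \<le> Z / gg j"
      using part[of "Suc n"] by (simp add: lessThan_Suc_atMost)
  qed simp
  show "suminf (\<lambda>i. (ee j i)^2) \<le> Z / gg j" by (rule suminf_le_const[OF s part])
qed




lemma dens_pos:
  assumes h: "\<And>N. N \<ge> Nz \<Longrightarrow> c * real N \<le> real (card {n\<in>A. n \<le> N^q})" and c: "c > 0"
  shows "q_lower_dens q A > 0"
proof -
  have "eventually (\<lambda>N. ereal c \<le> ereal (real (card {n\<in>A. n \<le> N ^ q}) / real N)) sequentially"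
  proof (rule eventually_sequentiallyI[of "max Nz 1"])
    fix N assume N: "max Nz 1 \<le> N"
    then have "c * real N \<le> real (card {n\<in>A. n \<le> N^q})" by (intro h) simp
    moreover have "real N > 0" using N by simp
    ultimately show "ereal c \<le> ereal (real (card {n\<in>A. n \<le> N ^ q}) / real N)"
      by (simp add: pos_le_divide_eq)
  qed
  then have l: "ereal c \<le> q_lower_dens q A" unfolding q_lower_dens_def by (rule Liminf_bounded)
  have "0 < ereal c" using c by simp
  then show ?thesis using l by (rule less_le_trans)
qed

lemma nu_val: "nu (2^k * (2*r+1)) = k"
proof (induction k)
  case 0
  then show ?case by (subst nu.simps) simp
next
  case (Suc k)
  have "nu (2^Suc k * (2*r+1)) = Suc (nu (2^Suc k * (2*r+1) div 2))"
    by (subst nu.simps) simp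
  also have "2^Suc k * (2*r+1) div 2 = 2^k * (2*r+1)" by simp
  finally show ?case using Suc by simp
qed

lemma dense_tvec:
  assumes y: "y \<in> l2" and e: "\<epsilon> > 0"
  shows "\<exists>k. summable (\<lambda>i. (tvec k i - y i)^2) \<and> suminf (\<lambda>i. (tvec k i - y i)^2) < \<epsilon>"
proof -
  have sy: "summable (\<lambda>i. (y i)^2)" using y by (simp add: l2_def)
  obtain N where N: "norm (\<Sum>i. (y (i + N))^2) < \<epsilon>/2"
    using suminf_exist_split[OF _ sy, of "\<epsilon>/2"] e by auto
  define \<delta> where "\<delta> = sqrt (\<epsilon> / (2 * real (N+1)))"
  have dpos: "\<delta> > 0" using e by (simp add: \<delta>_def)
  have dsq: "\<delta>^2 = \<epsilon> / (2 * real (N+1))" using e by (simp add: \<delta>_def)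
  have "\<forall>i. \<exists>q::rat. \<bar>of_rat q - y i\<bar> < \<delta>"
  proof
    fix i
    obtain r where r: "r \<in> \<rat>" "y i - \<delta> < r" "r < y i + \<delta>"
      using Rats_dense_in_real[of "y i - \<delta>" "y i + \<delta>"] dpos by auto
    from r(1) obtain q where "r = of_rat q" by (cases rule: Rats_cases)
    then show "\<exists>q::rat. \<bar>of_rat q - y i\<bar> < \<delta>" using r by (intro exI[of _ q]) auto
  qed
  then obtain f where f: "\<And>i. \<bar>of_rat (f i) - y i\<bar> < \<delta>" by metis
  define k where "k = to_nat (map f [0..<N])"
  have qk: "ql k = map f [0..<N]" by (simp add: ql_def k_def)
  have tv: "tvec k i = (if i < N then of_rat (f i) else 0)" for i
    by (simp add: tvec_def qk)
  define g where "g i = (tvec k i - y i)^2" for i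
  have gs: "g (i + N) = (y (i+N))^2" for i by (simp add: g_def tv)
  have sg: "summable g"
  proof -
    have "summable (\<lambda>i. g (i + N))" unfolding gs using sy by (subst summable_iff_shift)
    then show ?thesis by (subst (asm) summable_iff_shift)
  qed
  have "suminf g = (\<Sum>i. g (i + N)) + (\<Sum>i<N. g i)" by (rule suminf_split_initial_segment[OF sg])
  also have "(\<Sum>i. g (i + N)) < \<epsilon>/2" unfolding gs using N by simp
  also have "(\<Sum>i<N. g i) \<le> real N * (\<epsilon> / (2 * real (N+1)))"
  proof -
    have gi: "g i \<le> \<epsilon> / (2 * real (N+1))" if "i < N" for i
    proof -
      have "\<bar>tvec k i - y i\<bar> < \<delta>" using f[of i] that by (simp add: tv)
      then have "\<bar>tvec k i - y i\<bar>^2 \<le> \<delta>^2" by (intro power_mono) auto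
      then show ?thesis by (simp add: g_def dsq)
    qed
    have "(\<Sum>i<N. g i) \<le> (\<Sum>i<N. \<epsilon> / (2 * real (N+1)))"
      by (rule sum_mono) (rule gi, simp)
    then show ?thesis by simp
  qed
  also have "real N * (\<epsilon> / (2 * real (N+1))) \<le> \<epsilon>/2"
  proof -
    have "real N * (\<epsilon> / (2 * real (N+1))) = (\<epsilon>/2) * (real N / real (N+1))" by simp
    also have "\<dots> \<le> (\<epsilon>/2) * 1" using e by (intro mult_left_mono) auto
    finally show ?thesis by simp
  qed
  finally have "suminf g < \<epsilon>" by simp
  then show ?thesis using sg unfolding g_def by blast
qed




lemma gg_ge: "c \<ge> 0 \<Longrightarrow> c^4 \<le> real j \<Longrightarrow> c \<le> gg j"
proof -
  assume c: "c \<ge> 0" "c^4 \<le> real j"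
  have "sqrt (c^4) = c^2"
  proof -
    have eq: "c^4 = (c^2)^2" by (simp add: power4_eq_xxxx power2_eq_square)
    show ?thesis unfolding eq real_sqrt_abs abs_power2 ..
  qed
  then have "c^2 \<le> sqrt (real j)" using c(2) real_sqrt_le_mono by metis
  then have "sqrt (c^2) \<le> sqrt (sqrt (real j))" by (rule real_sqrt_le_mono)
  then show ?thesis using c(1) by (simp add: gg_def)
qed

lemma sq2: "(a+b)^2 \<le> 2*a^2 + 2*(b::real)^2"
  using power2_sum[of a b] power2_diff[of a b] zero_le_power2[of "a-b"] by linarith

lemma Hsz_nonneg: "Hsz k \<ge> 0" using Ssz_nonneg[of k] by (simp add: Hsz_def)

lemma fhc2:
  assumes w: "\<And>n. n \<ge> 1 \<Longrightarrow> w n = sqrt (real (n + 1) / real n)"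
  shows "l2_q_freq_hypercyclic 2 (bwshift w)"
  unfolding l2_q_freq_hypercyclic_def
proof (intro bexI[of _ xx] allI impI)
  show "xx \<in> l2" by (rule xx_l2)
  fix U assume "l2_open U \<and> U \<noteq> {}"
  then obtain y where yU: "y \<in> U" and Ul2: "U \<subseteq> l2"
    and op: "\<forall>y\<in>U. \<exists>e>0. \<forall>z\<in>l2. l2_norm (z - y) < e \<longrightarrow> z \<in> U"
    by (auto simp: l2_open_def)
  obtain e where e: "e > 0" "\<And>z. z \<in> l2 \<Longrightarrow> l2_norm (z - y) < e \<Longrightarrow> z \<in> U"
    using op yU by blast
  have y: "y \<in> l2" using yU Ul2 by auto
  have e4: "e^2/4 > 0" using e by simp
  obtain k where k: "summable (\<lambda>i. (tvec k i - y i)^2)" "suminf (\<lambda>i. (tvec k i - y i)^2) < e^2/4"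
    using dense_tvec[OF y e4] by auto
  define c where "c = max (Hsz k + 1) (4 * Z / e^2 + 1)"
  define j0 where "j0 = max 1 (nat \<lceil>c^4\<rceil>)"
  have c1: "c \<ge> 1" using Hsz_nonneg[of k] by (simp add: c_def)
  have good: "(bwshift w ^^ (j^2)) xx \<in> U" if j: "j \<ge> j0" "nu j = k" for j
  proof -
    have j1: "1 \<le> j" using j by (simp add: j0_def)
    have "c^4 \<le> real (nat \<lceil>c^4\<rceil>)" by linarith
    also have "\<dots> \<le> real j"
    proof -
      have "nat \<lceil>c^4\<rceil> \<le> j" using j(1) unfolding j0_def by linarith
      then show ?thesis by (simp only: of_nat_le_iff)
    qed
    finally have gc: "c \<le> gg j" using c1 by (intro gg_ge) auto
    have "Hsz k \<le> gg j" using gc by (simp add: c_def)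
    then have tgj: "tg j = tvec k" using j1 j(2) by (simp add: tg_def)
    have ggpos: "gg j > 0" using gc c1 by simp
    have es: "summable (\<lambda>i. (ee j i)^2)" and el: "suminf (\<lambda>i. (ee j i)^2) \<le> Z / gg j"
      using err_bound[OF j1] by auto
    have "Z / gg j \<le> Z / c" using gc c1 Z_nonneg by (intro divide_left_mono) auto
    also have "Z / c < e^2/4"
    proof -
      have "4 * Z / e^2 < c" by (simp add: c_def)
      then have "4 * Z < c * e^2" using e by (simp add: divide_less_eq)
      then have "Z * 4 < e\<^sup>2 * c" by (simp add: mult.commute)
      then show ?thesis using c1 by (simp add: divide_less_eq)
    qed
    finally have Zl: "Z / gg j < e^2/4" .
    define z where "z = (bwshift w ^^ (j^2)) xx"
    have z: "z = (\<lambda>i. pp i (j^2) * xx (i + j^2))" by (simp add: z_def Tn[OF w])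
    have zl2: "z \<in> l2" using shift_l2[OF xx_l2] by (simp add: z l2_def)
    have dec: "(z - y) i = ee j i + (tvec k i - y i)" for i by (simp add: z ee_def tgj)
    have sqb: "((z - y) i)^2 \<le> 2 * (ee j i)^2 + 2 * (tvec k i - y i)^2" for i
      unfolding dec by (rule sq2)
    have s2: "summable (\<lambda>i. 2 * (ee j i)^2 + 2 * (tvec k i - y i)^2)"
      using es k(1) by (intro summable_add summable_mult)
    have s1: "summable (\<lambda>i. ((z - y) i)^2)"
      by (rule summable_comparison_test[OF _ s2]) (use sqb in auto)
    have "suminf (\<lambda>i. ((z - y) i)^2) \<le> suminf (\<lambda>i. 2 * (ee j i)^2 + 2 * (tvec k i - y i)^2)"
      by (rule suminf_le[OF sqb s1 s2])
    also have "\<dots> = 2 * suminf (\<lambda>i. (ee j i)^2) + 2 * suminf (\<lambda>i. (tvec k i - y i)^2)"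
      using es k(1) by (simp add: suminf_add[symmetric] suminf_mult summable_mult)
    also have "\<dots> < e^2" using el Zl k(2) by linarith
    finally have "suminf (\<lambda>i. ((z - y) i)^2) < e^2" .
    then have "l2_norm (z - y) < sqrt (e^2)" unfolding l2_norm_def by (simp only: real_sqrt_less_iff)
    then have "l2_norm (z - y) < e" using e by simp
    then show ?thesis using e(2) zl2 by (simp add: z_def)
  qed
  define K :: nat where "K = 2^(k+1)"
  have K0: "K > 0" by (simp add: K_def)
  define A where "A = {n. (bwshift w ^^ n) xx \<in> U}"
  show "q_lower_dens 2 {n. (bwshift w ^^ n) xx \<in> U} > 0"
    unfolding A_def[symmetric]
  proof (rule dens_pos[where Nz = "2*K*(j0+1)" and c = "1/(2*real K)"])
    fix N :: nat assume N: "N \<ge> 2*K*(j0+1)"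
    define q where "q = N div K"
    define h where "h r = (2^k*(2*r+1))^2" for r :: nat
    have inj: "inj_on h {j0..<q}"
    proof (rule inj_onI)
      fix a b assume "h a = h b"
      then have "2^k*(2*a+1) = (2^k*(2*b+1)::nat)" unfolding h_def by (simp add: power2_eq_iff_nonneg)
      then show "a = b" by simp
    qed
    have sub: "h ` {j0..<q} \<subseteq> {n\<in>A. n \<le> N^2}"
    proof
      fix n assume "n \<in> h ` {j0..<q}"
      then obtain r where r: "j0 \<le> r" "r < q" "n = h r" by auto
      define j where "j = 2^k*(2*r+1)"
      have "r \<le> j" unfolding j_def
        using mult_le_mono[of 1 "2^k" r "2*r+1"] by simp
      then have jj: "j \<ge> j0" using r by simp
      have nj: "nu j = k" unfolding j_def by (rule nu_val)
      have "n \<in> A" using good[OF jj nj] r(3) by (simp add: A_def h_def j_def)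
      moreover have "j \<le> N"
      proof -
        have "j \<le> K * (r+1)" by (simp add: j_def K_def)
        also have "\<dots> \<le> K * q" using r(2) by (intro mult_le_mono2) simp
        also have "\<dots> \<le> N" unfolding q_def by (simp add: mult.commute)
        finally show ?thesis .
      qed
      then have "n \<le> N^2" using r(3) by (simp add: h_def j_def power_mono)
      ultimately show "n \<in> {n\<in>A. n \<le> N^2}" by simp
    qed
    have fin: "finite {n\<in>A. n \<le> N^2}" by simp
    have "q - j0 = card (h ` {j0..<q})" using card_image[OF inj] by simp
    also have "\<dots> \<le> card {n\<in>A. n \<le> N^2}" by (rule card_mono[OF fin sub])
    finally have cq: "q - j0 \<le> card {n\<in>A. n \<le> N^2}" .
    have f1: "N < K*q + K" unfolding q_def
    proof -
      have "K * (N div K) + N mod K = N" by (rule mult_div_mod_eq)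
      moreover have "N mod K < K" using K0 by simp
      ultimately show "N < K * (N div K) + K" by linarith
    qed
    have f2: "2*(K*j0) + 2*K \<le> N" using N by (simp add: algebra_simps)
    have "K*j0 \<le> K*q" using f1 f2 by linarith
    then have "j0 \<le> q" using K0 by simp
    have "N \<le> 2*(K*q) - 2*(K*j0)" using f1 f2 by linarith
    also have "\<dots> = 2*K*(q - j0)" by (simp add: diff_mult_distrib2)
    finally have "N \<le> 2*K*(q - j0)" .
    then have "real N \<le> real (2 * K * (q - j0))" by (simp only: of_nat_le_iff)
    then have "real N \<le> 2 * real K * real (q - j0)" by (simp only: of_nat_mult of_nat_numeral)
    then have "1 / (2 * real K) * real N \<le> real (q - j0)" using K0 by (simp add: field_simps)
    also have "\<dots> \<le> real (card {n\<in>A. n \<le> N^2})" using cq by simp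
    finally show "1 / (2 * real K) * real N \<le> real (card {n\<in>A. n \<le> N^2})" .
  next
    show "1 / (2 * real K) > 0" using K0 by simp
  qed
qed




lemma qmono: "q \<ge> 2 \<Longrightarrow> q_lower_dens 2 A \<le> q_lower_dens q A"
  unfolding q_lower_dens_def
proof (rule Liminf_mono)
  assume q: "q \<ge> 2"
  show "eventually (\<lambda>N. ereal (real (card {n\<in>A. n \<le> N ^ 2}) / real N)
      \<le> ereal (real (card {n\<in>A. n \<le> N ^ q}) / real N)) sequentially"
  proof (rule eventually_sequentiallyI[of 1])
    fix N :: nat assume N: "1 \<le> N"
    have "N^2 \<le> N^q" using N q by (intro power_increasing) auto
    then have "{n\<in>A. n \<le> N^2} \<subseteq> {n\<in>A. n \<le> N^q}" by auto
    then have "card {n\<in>A. n \<le> N^2} \<le> card {n\<in>A. n \<le> N^q}" by (intro card_mono) auto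
    then show "ereal (real (card {n\<in>A. n \<le> N ^ 2}) / real N)
      \<le> ereal (real (card {n\<in>A. n \<le> N ^ q}) / real N)"
      by (simp add: divide_right_mono)
  qed
qed

lemma diff_l2: "a \<in> l2 \<Longrightarrow> b \<in> l2 \<Longrightarrow> summable (\<lambda>i. (a i - b i)^2)"
proof -
  assume a: "a \<in> l2" and b: "b \<in> l2"
  have s: "summable (\<lambda>i. 2 * (a i)^2 + 2 * (- b i)^2)"
    using a b by (intro summable_add summable_mult) (auto simp: l2_def)
  show ?thesis
  proof (rule summable_comparison_test[OF _ s])
    show "\<exists>N. \<forall>n\<ge>N. norm ((a n - b n)^2) \<le> 2 * (a n)^2 + 2 * (- b n)^2"
      using sq2[of "a _" "- b _"] by auto
  qed
qed

lemma coord0: "summable (\<lambda>i. (v i)^2) \<Longrightarrow> \<bar>v 0\<bar> \<le> sqrt (suminf (\<lambda>i. (v i)^2))"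
proof -
  assume s: "summable (\<lambda>i. (v i)^2)"
  have "sum (\<lambda>i. (v i)^2) {0} \<le> suminf (\<lambda>i. (v i)^2)" by (rule sum_le_suminf[OF s]) auto
  then have "(v 0)^2 \<le> suminf (\<lambda>i. (v i)^2)" by simp
  then have "sqrt ((v 0)^2) \<le> sqrt (suminf (\<lambda>i. (v i)^2))" by (rule real_sqrt_le_mono)
  then show ?thesis by simp
qed

lemma not_fhc:
  assumes w: "\<And>n. n \<ge> 1 \<Longrightarrow> w n = sqrt (real (n + 1) / real n)"
  shows "\<not> l2_freq_hypercyclic (bwshift w)"
proof
  assume "l2_freq_hypercyclic (bwshift w)"
  then obtain x where x: "x \<in> l2"
    and H: "\<And>U. l2_open U \<Longrightarrow> U \<noteq> {} \<Longrightarrow> q_lower_dens 1 {n. (bwshift w ^^ n) x \<in> U} > 0"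
    by (auto simp: l2_freq_hypercyclic_def l2_q_freq_hypercyclic_def)
  define U where "U = {z \<in> l2. \<bar>z 0 - 1\<bar> < 1/2}"
  have Uopen: "l2_open U" unfolding l2_open_def
  proof (intro conjI ballI)
    show "U \<subseteq> l2" by (auto simp: U_def)
    fix y assume yU: "y \<in> U"
    show "\<exists>e>0. \<forall>z\<in>l2. l2_norm (z - y) < e \<longrightarrow> z \<in> U"
    proof (intro exI[of _ "1/2 - \<bar>y 0 - 1\<bar>"] conjI ballI impI)
      show "1/2 - \<bar>y 0 - 1\<bar> > 0" using yU by (simp add: U_def)
      fix z assume z: "z \<in> l2" and d: "l2_norm (z - y) < 1/2 - \<bar>y 0 - 1\<bar>"
      have "summable (\<lambda>i. (z i - y i)^2)" using z yU by (intro diff_l2) (auto simp: U_def)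
      then have "\<bar>z 0 - y 0\<bar> \<le> sqrt (suminf (\<lambda>i. (z i - y i)^2))"
        using coord0[of "\<lambda>i. z i - y i"] by simp
      also have "\<dots> = l2_norm (z - y)" by (simp add: l2_norm_def)
      finally have "\<bar>z 0 - y 0\<bar> < 1/2 - \<bar>y 0 - 1\<bar>" using d by linarith
      then have "\<bar>z 0 - 1\<bar> < 1/2" by linarith
      then show "z \<in> U" using z by (simp add: U_def)
    qed
  qed
  have Une: "U \<noteq> {}"
  proof -
    define d :: "nat \<Rightarrow> real" where "d i = (if i = 0 then 1 else 0)" for i
    have "summable (\<lambda>i. (d i)^2)" by (rule summable_finite[of "{0}"]) (auto simp: d_def)
    then have "d \<in> U" by (simp add: U_def l2_def d_def)
    then show ?thesis by auto
  qed
  define A where "A = {n. (bwshift w ^^ n) x \<in> U}"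
  have pos: "q_lower_dens 1 A > 0" unfolding A_def by (rule H[OF Uopen Une])
  obtain c where c: "0 < ereal c" "ereal c < q_lower_dens 1 A" using ereal_dense2[OF pos] by blast
  have c0: "c > 0" using c(1) by simp
  have "eventually (\<lambda>N. ereal c < ereal (real (card {n\<in>A. n \<le> N ^ 1}) / real N)) sequentially"
    using c(2) unfolding q_lower_dens_def by (rule less_LiminfD)
  then obtain N1 where N1: "\<And>N. N \<ge> N1 \<Longrightarrow> c < real (card {n\<in>A. n \<le> N}) / real N"
    unfolding eventually_sequentially by auto
  have memb: "(x n)^2 > 1 / (4 * real (n+1))" if "n \<in> A" for n
  proof -
    have "\<bar>pp 0 n * x n - 1\<bar> < 1/2" using that by (simp add: A_def U_def Tn[OF w])
    then have "pp 0 n * x n > 1/2" by linarith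
    then have "(1/2)^2 < (pp 0 n * x n)^2" by (intro power_strict_mono) auto
    then have "(1/2)^2 < real (n+1) * (x n)^2" by (simp add: power_mult_distrib pp_sq)
    then have "1/4 < real (n+1) * (x n)^2" by (simp add: power_divide)
    moreover have "(x n)^2 * (4 * real (n+1)) = 4 * (real (n+1) * (x n)^2)" by (simp only: ac_simps)
    ultimately have "1 < (x n)^2 * (4 * real (n+1))" by linarith
    moreover have "0 < 4 * real (n+1)" by simp
    ultimately show ?thesis by (simp only: pos_divide_less_eq)
  qed
  have sx: "summable (\<lambda>i. (x i)^2)" using x by (simp add: l2_def)
  obtain M1 where M1: "\<And>m. m \<ge> M1 \<Longrightarrow> norm (\<Sum>i. (x (i + m))^2) < c/16"
    using suminf_exist_split[OF _ sx, of "c/16"] c0 by auto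
  define M where "M = max N1 M1"
  define N where "N = M + nat \<lceil>2 * real (M+1) / c\<rceil> + 1"
  have NN1: "N \<ge> N1" and N1pos: "N \<ge> 1" by (auto simp: N_def M_def)
  have cN: "c * real N \<ge> 2 * real (M+1)"
  proof -
    have "2 * real (M+1) / c \<le> real N" unfolding N_def by linarith
    then show ?thesis using c0 by (simp add: divide_le_eq mult.commute)
  qed
  define B where "B = {n\<in>A. M \<le> n \<and> n \<le> N}"
  have finB: "finite B" by (simp add: B_def)
  have "{n\<in>A. n \<le> N} \<subseteq> B \<union> {..<M}" by (auto simp: B_def)
  then have "card {n\<in>A. n \<le> N} \<le> card (B \<union> {..<M})" by (intro card_mono) (auto simp: finB)
  also have "\<dots> \<le> card B + card {..<M}" by (rule card_Un_le)
  finally have cardB: "card {n\<in>A. n \<le> N} \<le> card B + M" by simp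
  have "c < real (card {n\<in>A. n \<le> N}) / real N" by (rule N1[OF NN1])
  then have "c * real N < real (card {n\<in>A. n \<le> N})" using N1pos by (simp add: pos_less_divide_eq)
  also have "\<dots> \<le> real (card B) + real M" using cardB by linarith
  finally have cB: "c * real N / 2 \<le> real (card B)" using cN by simp
  have "real (card B) * (1 / (4 * real (N+1))) \<le> (\<Sum>n\<in>B. (x n)^2)"
  proof -
    have "(\<Sum>n\<in>B. 1 / (4 * real (N+1))) \<le> (\<Sum>n\<in>B. (x n)^2)"
    proof (rule sum_mono)
      fix n assume n: "n \<in> B"
      have "1 / (4 * real (N+1)) \<le> 1 / (4 * real (n+1))" using n
        by (intro divide_left_mono) (auto simp: B_def)
      also have "\<dots> < (x n)^2" using memb n by (simp add: B_def)
      finally show "1 / (4 * real (N+1)) \<le> (x n)^2" by simp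
    qed
    then show ?thesis by simp
  qed
  moreover have "c/16 \<le> real (card B) * (1 / (4 * real (N+1)))"
  proof -
    have "c/16 \<le> c * real N / 2 * (1 / (4 * real (N+1)))"
    proof -
      have "real N + 1 \<le> 2 * real N" using N1pos by simp
      then have "c * (real N + 1) \<le> c * (2 * real N)" using c0 by (intro mult_left_mono) auto
      then show ?thesis by (simp add: field_simps)
    qed
    also have "\<dots> \<le> real (card B) * (1 / (4 * real (N+1)))"
      using cB by (intro mult_right_mono) auto
    finally show ?thesis .
  qed
  moreover have "(\<Sum>n\<in>B. (x n)^2) < c/16"
  proof -
    have inj: "inj_on (\<lambda>n. n - M) B" by (rule inj_onI) (auto simp: B_def)
    have "(\<Sum>n\<in>B. (x n)^2) = (\<Sum>i\<in>(\<lambda>n. n - M) ` B. (x (i + M))^2)"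
      by (subst sum.reindex[OF inj]) (auto simp: B_def intro!: sum.cong)
    also have "\<dots> \<le> (\<Sum>i. (x (i + M))^2)"
    proof (rule sum_le_suminf)
      show "summable (\<lambda>i. (x (i + M))^2)"
        using summable_iff_shift[where f="\<lambda>i. (x i)^2" and k=M] sx by simp
    qed (use finB in auto)
    also have "\<dots> < c/16" using M1[of M] by (simp add: M_def)
    finally show ?thesis .
  qed
  ultimately show False by linarith
qed



theorem corollary4p2:
  fixes w :: "nat \<Rightarrow> real"
  assumes "\<And>n. n \<ge> 1 \<Longrightarrow> w n = sqrt (real (n + 1) / real n)"
  shows "l2_q_freq_hypercyclic 2 (bwshift w)
       \<and> \<not> l2_freq_hypercyclic (bwshift w)
       \<and> (\<forall>q::nat. q \<ge> 2 \<longrightarrow> l2_q_freq_hypercyclic q (bwshift w))"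
proof (intro conjI allI impI)
  show f2: "l2_q_freq_hypercyclic 2 (bwshift w)" by (rule fhc2[OF assms])
  show "\<not> l2_freq_hypercyclic (bwshift w)" by (rule not_fhc[OF assms])
  fix q :: nat assume q: "q \<ge> 2"
  from f2 obtain x where x: "x \<in> l2"
    and H: "\<And>U. l2_open U \<and> U \<noteq> {} \<Longrightarrow> q_lower_dens 2 {n. (bwshift w ^^ n) x \<in> U} > 0"
    unfolding l2_q_freq_hypercyclic_def by blast
  show "l2_q_freq_hypercyclic q (bwshift w)"
    unfolding l2_q_freq_hypercyclic_def
  proof (intro bexI[OF _ x] allI impI)
    fix U assume "l2_open U \<and> U \<noteq> {}"
    then have "q_lower_dens 2 {n. (bwshift w ^^ n) x \<in> U} > 0" by (rule H)
    also have "q_lower_dens 2 {n. (bwshift w ^^ n) x \<in> U} \<le> q_lower_dens q {n. (bwshift w ^^ n) x \<in> U}"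
      by (rule qmono[OF q])
    finally show "q_lower_dens q {n. (bwshift w ^^ n) x \<in> U} > 0" .
  qed
qed

end
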